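(* Let $\Bbbk$ be a field of characteristic zero, let $n \geq 3$, $d \geq 2$, and $S=\Bbbk[x_1,\ldots,x_n]$. Let $$\beta(n,d) =\binom{n+d-1}{d}-\begin{cases} 3(d-1) & \text{if } n=3 \text{ and } d\geq 3 \text{ is odd,} \\ 3(d-1)+1 & \text{if } n=3 \text{ and } d\geq 2 \text{ is even,} \\ 2d & \text{if } n\geq 4. \end{cases}$$ Then for every integer $\mu\in \left[\mathrm{HF}(S,d)-\mathrm{HF}(S,d-1), \beta(n,d) \right]$ there exists an artinian monomial ideal $I$ minimally generated by $\mu$ elements of degree $d$ such that $S/I$ fails the WLP by surjectivity in degree $d-1$. Moreover, this interval is non-empty except for the case $n=3$, $d= 2$.
   Context: $\mathrm{HF}(A,k)=\dim_\Bbbk A_k$. For a monomial ideal $I$, $A=S/I$ fails the WLP in degree $i$ if $\times(x_1+\cdots+x_n): A_i\to A_{i+1}$ does not have maximal rank; it fails the WLP by surjectivity in degree $i$ if in addition $\mathrm{HF}(A,i)\ge \mathrm{HF}(A,i+1)$. *)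

theory Defs
  imports Main
begin

text \<open>Monomials of S = k[x_1,...,x_n] are exponent vectors (variables indexed 0..n-1),
  with exponents 0 outside {0..<n}. Divisibility of monomials is pointwise order.\<close>

type_synonym monom = "nat \<Rightarrow> nat"

definition monoms :: "nat \<Rightarrow> nat \<Rightarrow> monom set" where
  "monoms n k = {m. (\<forall>i\<ge>n. m i = 0) \<and> (\<Sum>i<n. m i) = k}"

definition HF_S :: "nat \<Rightarrow> nat \<Rightarrow> nat" where
  "HF_S n k = card (monoms n k)"

text \<open>A monomial ideal I is given by a set G of monomial generators; a monomial
  lies in I iff some generator divides it.\<close>
definition in_mideal :: "monom set \<Rightarrow> monom \<Rightarrow> bool" where
  "in_mideal G m \<longleftrightarrow> (\<exists>g\<in>G. g \<le> m)"

text \<open>Standard monomials of degree k: a basis of (S/I)_k.\<close>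
definition std :: "nat \<Rightarrow> monom set \<Rightarrow> nat \<Rightarrow> monom set" where
  "std n G k = {m \<in> monoms n k. \<not> in_mideal G m}"

definition HF_A :: "nat \<Rightarrow> monom set \<Rightarrow> nat \<Rightarrow> nat" where
  "HF_A n G k = card (std n G k)"

definition minimal_gens :: "monom set \<Rightarrow> bool" where
  "minimal_gens G \<longleftrightarrow> (\<forall>g\<in>G. \<forall>h\<in>G. h \<le> g \<longrightarrow> h = g)"

definition artinian :: "nat \<Rightarrow> monom set \<Rightarrow> bool" where
  "artinian n G \<longleftrightarrow> (\<forall>i<n. \<exists>a. in_mideal G (\<lambda>j. if j = i then a else 0))"

text \<open>The graded piece (S/I)_k over the field 'k, as coefficient vectors on the
  standard monomial basis.\<close>
definition Apiece :: "'k::field itself \<Rightarrow> nat \<Rightarrow> monom set \<Rightarrow> nat \<Rightarrow> (monom \<Rightarrow> 'k) set" where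
  "Apiece _ n G k = {f. \<forall>m. m \<notin> std n G k \<longrightarrow> f m = 0}"

text \<open>Multiplication by x_1+...+x_n from (S/I)_k to (S/I)_{k+1}: the coefficient of a
  standard monomial m' in the product is the sum of the coefficients of m'/x_j.\<close>
definition mult_ell :: "nat \<Rightarrow> monom set \<Rightarrow> nat \<Rightarrow> (monom \<Rightarrow> 'k::field) \<Rightarrow> (monom \<Rightarrow> 'k)" where
  "mult_ell n G k f = (\<lambda>m'. if m' \<in> std n G (Suc k)
      then (\<Sum>j<n. if 0 < m' j then f (m'(j := m' j - 1)) else 0) else 0)"

definition maximal_rank :: "'k::field itself \<Rightarrow> nat \<Rightarrow> monom set \<Rightarrow> nat \<Rightarrow> bool" where
  "maximal_rank T n G k \<longleftrightarrow>
     inj_on (mult_ell n G k :: (monom \<Rightarrow> 'k) \<Rightarrow> _) (Apiece T n G k)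
     \<or> (mult_ell n G k) ` (Apiece T n G k) = Apiece T n G (Suc k)"

definition fails_WLP_surj :: "'k::field itself \<Rightarrow> nat \<Rightarrow> monom set \<Rightarrow> nat \<Rightarrow> bool" where
  "fails_WLP_surj T n G k \<longleftrightarrow> \<not> maximal_rank T n G k \<and> HF_A n G k \<ge> HF_A n G (Suc k)"

definition beta :: "nat \<Rightarrow> nat \<Rightarrow> int" where
  "beta n d = int ((n + d - 1) choose d) -
     (if n = 3 \<and> odd d then 3 * (int d - 1)
      else if n = 3 \<and> even d then 3 * (int d - 1) + 1
      else 2 * int d)"

end

theory Submission
  imports Defs "HOL-Library.Function_Algebras" "HOL.Vector_Spaces"
begin

lemma fun_sum_apply: "(sum f A) x = (\<Sum>a\<in>A. f a x)"
  by (induction A rule: infinite_finite_induct) auto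

lemma sum_upd:
  fixes u :: "nat \<Rightarrow> nat"
  assumes "j < n"
  shows "(\<Sum>i<n. (u(j:=x)) i) + u j = (\<Sum>i<n. u i) + x"
proof -
  have "(\<Sum>i<n. (u(j:=x)) i) = x + (\<Sum>i\<in>{..<n}-{j}. u i)"
    using assms by (simp add: sum.remove[of "{..<n}" j])
  moreover have "(\<Sum>i<n. u i) = u j + (\<Sum>i\<in>{..<n}-{j}. u i)"
    using assms by (simp add: sum.remove[of "{..<n}" j])
  ultimately show ?thesis by simp
qed

lemma bij_shift:
  assumes "j < n"
  shows "bij_betw (\<lambda>u. u(j := u j + 1)) (monoms n k) {m \<in> monoms n (Suc k). 0 < m j}"
proof (rule bij_betw_byWitness[where f'="\<lambda>m. m(j := m j - 1)"])
  show "\<forall>a\<in>monoms n k. (\<lambda>m. m(j := m j - 1)) (a(j := a j + 1)) = a" by auto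
  show "\<forall>a'\<in>{m \<in> monoms n (Suc k). 0 < m j}. a'(j := a' j - 1, j := (a'(j := a' j - 1)) j + 1) = a'"
    by auto
  show "(\<lambda>u. u(j := u j + 1)) ` monoms n k \<subseteq> {m \<in> monoms n (Suc k). 0 < m j}"
  proof clarify
    fix u assume u: "u \<in> monoms n k"
    have "(\<Sum>i<n. (u(j:=u j + 1)) i) + u j = (\<Sum>i<n. u i) + (u j + 1)"
      using sum_upd[OF assms] by blast
    then show "u(j := u j + 1) \<in> monoms n (Suc k) \<and> 0 < (u(j := u j + 1)) j"
      using u assms by (auto simp: monoms_def)
  qed
  show "(\<lambda>m. m(j := m j - 1)) ` {m \<in> monoms n (Suc k). 0 < m j} \<subseteq> monoms n k"
  proof clarify
    fix m assume m: "m \<in> monoms n (Suc k)" "0 < m j"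
    have "(\<Sum>i<n. (m(j:=m j - 1)) i) + m j = (\<Sum>i<n. m i) + (m j - 1)"
      using sum_upd[OF assms] by blast
    then show "m(j := m j - 1) \<in> monoms n k"
      using m assms by (auto simp: monoms_def)
  qed
qed

lemma monoms_Suc_split:
  "monoms (Suc n) (Suc k) = monoms n (Suc k) \<union> {m \<in> monoms (Suc n) (Suc k). 0 < m n}"
proof (rule set_eqI)
  fix m :: monom
  have A: "(\<forall>i\<ge>n. m i = 0) \<longleftrightarrow> (m n = 0 \<and> (\<forall>i\<ge>Suc n. m i = 0))"
  proof
    assume h0: "\<forall>i\<ge>n. m i = 0"
    have "m n = 0" using h0 by (simp only: order_refl simp_thms)
    moreover have "\<forall>i\<ge>Suc n. m i = 0"
    proof (intro allI impI)
      fix i assume "Suc n \<le> i"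
      then have "n \<le> i" by simp
      then show "m i = 0" using h0 by (simp only: simp_thms)
    qed
    ultimately show "m n = 0 \<and> (\<forall>i\<ge>Suc n. m i = 0)" by (rule conjI)
  next
    assume h: "m n = 0 \<and> (\<forall>i\<ge>Suc n. m i = 0)"
    show "\<forall>i\<ge>n. m i = 0"
    proof (intro allI impI)
      fix i assume "n \<le> i"
      then have "i = n \<or> Suc n \<le> i" by linarith
      then show "m i = 0" using h by (elim disjE) (simp_all only: simp_thms)
    qed
  qed
  have S: "(\<Sum>i<Suc n. m i) = (\<Sum>i<n. m i) + m n" by simp
  show "m \<in> monoms (Suc n) (Suc k) \<longleftrightarrow> m \<in> monoms n (Suc k) \<union> {m \<in> monoms (Suc n) (Suc k). 0 < m n}"
    unfolding monoms_def mem_Collect_eq Un_iff S A by (cases "m n = 0") simp_all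
qed

lemma monoms_zero: "monoms n 0 = {\<lambda>_. 0}"
proof
  show "monoms n 0 \<subseteq> {\<lambda>_. 0}"
  proof
    fix m assume m: "m \<in> monoms n 0"
    have "m i = 0" for i
    proof (cases "i < n")
      case True
      then show ?thesis using m by (simp add: monoms_def)
    next
      case False
      then show ?thesis using m by (simp add: monoms_def)
    qed
    then show "m \<in> {\<lambda>_. 0}" by auto
  qed
  show "{\<lambda>_. 0} \<subseteq> monoms n 0" by (simp add: monoms_def)
qed

lemma monoms_zero_vars: "monoms 0 (Suc k) = {}"
  by (simp add: monoms_def)

lemma monoms_step:
  assumes IH1: "finite (monoms n (Suc k)) \<and> card (monoms n (Suc k)) = (n + Suc k - 1) choose Suc k"
    and IH2: "finite (monoms (Suc n) k) \<and> card (monoms (Suc n) k) = (Suc n + k - 1) choose k"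
  shows "finite (monoms (Suc n) (Suc k)) \<and> card (monoms (Suc n) (Suc k)) = (Suc n + Suc k - 1) choose Suc k"
proof -
  let ?B = "{m \<in> monoms (Suc n) (Suc k). 0 < m n}"
  have b: "bij_betw (\<lambda>u. u(n := u n + 1)) (monoms (Suc n) k) ?B"
    by (rule bij_shift) simp
  have f2: "finite ?B"
    using b IH2 bij_betw_finite by blast
  have c2: "card ?B = card (monoms (Suc n) k)"
    using bij_betw_same_card[OF b] by (rule sym)
  have disj: "monoms n (Suc k) \<inter> ?B = {}"
  proof (rule ccontr)
    assume "monoms n (Suc k) \<inter> ?B \<noteq> {}"
    then obtain m where m: "m \<in> monoms n (Suc k)" "0 < m n" by blast
    from m(1) have "\<forall>i\<ge>n. m i = 0" unfolding monoms_def by blast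
    then have "m n = 0" by blast
    then show False using m(2) by simp
  qed
  have f1: "finite (monoms n (Suc k))" using IH1 by blast
  have "card (monoms n (Suc k) \<union> ?B) = card (monoms n (Suc k)) + card ?B"
    by (rule card_Un_disjoint[OF f1 f2 disj])
  also have "\<dots> = (n + k choose Suc k) + (n + k choose k)" using IH1 IH2 c2 by simp
  also have "\<dots> = (Suc n + Suc k - 1) choose Suc k" by simp
  finally have "finite (monoms n (Suc k) \<union> ?B) \<and> card (monoms n (Suc k) \<union> ?B) = (Suc n + Suc k - 1) choose Suc k"
    using f1 f2 by blast
  then show ?thesis by (simp only: monoms_Suc_split[of n k, symmetric])
qed

lemma monoms_fc: "finite (monoms n d) \<and> card (monoms n d) = (n + d - 1) choose d"
proof (induction n arbitrary: d)
  case 0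
  then show ?case by (cases d) (auto simp: monoms_zero monoms_zero_vars)
next
  case (Suc n)
  note IHn = Suc.IH
  show ?case
  proof (induction d)
    case 0
    then show ?case by (simp add: monoms_zero)
  next
    case (Suc k)
    then show ?case using monoms_step[OF IHn[of "Suc k"]] by blast
  qed
qed

lemma HF_S_eq: "HF_S n d = (n + d - 1) choose d"
  using monoms_fc by (simp add: HF_S_def)

lemma finite_monoms[simp]: "finite (monoms n d)"
  using monoms_fc by blast

lemma sum_le_monom:
  fixes g m :: monom
  assumes "g \<le> m" shows "(\<Sum>i<n. g i) \<le> (\<Sum>i<n. m i)"
  using assms by (intro sum_mono) (auto simp: le_fun_def)

lemma le_monom_eq:
  assumes "g \<in> monoms n d" "m \<in> monoms n d" "g \<le> m" shows "g = m"
proof (rule ccontr)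
  assume "g \<noteq> m"
  then obtain i where i: "g i \<noteq> m i" by auto
  have "i < n"
  proof (rule ccontr)
    assume "\<not> i < n"
    then have "g i = 0" "m i = 0" using assms by (auto simp: monoms_def)
    then show False using i by simp
  qed
  have "g i < m i" using i assms(3) by (simp add: le_fun_def order_less_le)
  then have "(\<Sum>i<n. g i) < (\<Sum>i<n. m i)"
    using \<open>i < n\<close> assms(3) by (intro sum_strict_mono_ex1) (auto simp: le_fun_def)
  then show False using assms by (simp add: monoms_def)
qed

lemma le_monom_deg:
  assumes "g \<in> monoms n d" "m \<in> monoms n k" "g \<le> m" shows "d \<le> k"
  using sum_le_monom[OF assms(3), of n] assms by (simp add: monoms_def)

lemma LA:
  fixes w :: "'a \<Rightarrow> ('b \<Rightarrow> 'k::field)" and c :: "'b \<Rightarrow> 'k"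
  assumes fU: "finite U" and fM: "finite M" and m0: "m0 \<in> M" "c m0 \<noteq> 0"
    and cardle: "card M \<le> card U"
    and supp: "\<And>u m. u \<in> U \<Longrightarrow> m \<notin> M \<Longrightarrow> w u m = 0"
    and orth: "\<And>u. u \<in> U \<Longrightarrow> (\<Sum>m\<in>M. c m * w u m) = 0"
    and indep: "\<And>a. (\<And>m. (\<Sum>u\<in>U. a u * w u m) = 0) \<Longrightarrow> (\<forall>u\<in>U. a u = 0)"
  shows False
proof -
  interpret fv: vector_space "\<lambda>(a::'k) (f::'b \<Rightarrow> 'k) x. a * f x"
    by unfold_locales (auto simp: fun_eq_iff algebra_simps)
  have injw: "inj_on w U"
  proof (rule inj_onI, rule ccontr)
    fix u u' assume uu: "u \<in> U" "u' \<in> U" "w u = w u'" "u \<noteq> u'"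
    define a where "a = (\<lambda>v. if v = u then (1::'k) else if v = u' then -1 else 0)"
    have z: "(\<Sum>v\<in>U. a v * w v m) = 0" for m
    proof -
      have "(\<Sum>v\<in>U. a v * w v m) = (\<Sum>v\<in>U. (if v = u then w u m else 0) - (if v = u' then w u' m else 0))"
        by (rule sum.cong) (auto simp: a_def uu(4))
      also have "\<dots> = (\<Sum>v\<in>U. (if v = u then w u m else 0)) - (\<Sum>v\<in>U. (if v = u' then w u' m else 0))"
        by (rule sum_subtractf)
      also have "\<dots> = w u m - w u' m" using uu(1,2) fU by simp
      also have "\<dots> = 0" using uu(3) by simp
      finally show ?thesis .
    qed
    have "\<forall>u\<in>U. a u = 0" by (rule indep) (rule z)
    then have "a u = 0" using uu(1) by blast
    then show False by (simp add: a_def)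
  qed
  have ind: "fv.independent (w ` U)"
    unfolding fv.independent_explicit_finite_subsets
  proof (intro allI impI ballI)
    fix S b v assume S: "S \<subseteq> w ` U" "finite S" and eq: "(\<Sum>v\<in>S. (\<lambda>x. b v * v x)) = 0" and v: "v \<in> S"
    define a where "a = (\<lambda>u. if w u \<in> S then b (w u) else 0)"
    have "\<And>m. (\<Sum>u\<in>U. a u * w u m) = 0"
    proof -
      fix m
      have "(\<Sum>u\<in>U. a u * w u m) = (\<Sum>u\<in>U \<inter> w -` S. b (w u) * w u m)"
        by (rule sum.mono_neutral_cong_right) (auto simp: a_def fU)
      also have "\<dots> = (\<Sum>v\<in>S. b v * v m)"
      proof (rule sum.reindex_cong[symmetric])
        show "inj_on w (U \<inter> w -` S)" using injw by (rule inj_on_subset) auto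
        show "S = w ` (U \<inter> w -` S)" using S by auto
      qed simp
      also have "\<dots> = (\<Sum>v\<in>S. (\<lambda>x. b v * v x)) m" by (simp add: fun_sum_apply)
      also have "\<dots> = 0" using eq by simp
      finally show "(\<Sum>u\<in>U. a u * w u m) = 0" .
    qed
    then have az: "\<forall>u\<in>U. a u = 0" by (rule indep)
    obtain u where "u \<in> U" "v = w u" using S v by auto
    then show "b v = 0" using az v by (auto simp: a_def)
  qed
  define \<delta> :: "'b \<Rightarrow> 'b \<Rightarrow> 'k" where "\<delta> = (\<lambda>m x. if x = m then (1::'k) else 0)"
  define T :: "('b \<Rightarrow> 'k) set" where "T = (\<lambda>m::'b. (\<lambda>x. \<delta> m x - (c m / c m0) * \<delta> m0 x)) ` (M - {m0})"
  have spanT: "w ` U \<subseteq> fv.span T"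
  proof clarify
    fix u assume u: "u \<in> U"
    have eq: "w u = (\<Sum>m\<in>M - {m0}. (\<lambda>x. w u m * (\<delta> m x - (c m / c m0) * \<delta> m0 x)))"
    proof (rule ext)
      fix x
      have r: "(\<Sum>m\<in>M - {m0}. (\<lambda>x. w u m * (\<delta> m x - (c m / c m0) * \<delta> m0 x))) x
          = (\<Sum>m\<in>M - {m0}. w u m * \<delta> m x) - (\<Sum>m\<in>M - {m0}. w u m * c m / c m0) * \<delta> m0 x"
      proof -
        have "(\<Sum>m\<in>M - {m0}. (\<lambda>x. w u m * (\<delta> m x - (c m / c m0) * \<delta> m0 x))) x
            = (\<Sum>m\<in>M - {m0}. w u m * \<delta> m x - (w u m * c m / c m0) * \<delta> m0 x)"
          unfolding fun_sum_apply by (rule sum.cong) (auto simp: right_diff_distrib)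
        also have "\<dots> = (\<Sum>m\<in>M - {m0}. w u m * \<delta> m x) - (\<Sum>m\<in>M - {m0}. (w u m * c m / c m0) * \<delta> m0 x)"
          by (rule sum_subtractf)
        also have "(\<Sum>m\<in>M - {m0}. (w u m * c m / c m0) * \<delta> m0 x) = (\<Sum>m\<in>M - {m0}. w u m * c m / c m0) * \<delta> m0 x"
          by (rule sum_distrib_right[symmetric])
        finally show ?thesis .
      qed
      have o: "c m0 * w u m0 + (\<Sum>m\<in>M - {m0}. c m * w u m) = 0"
        using orth[OF u] fM m0 by (simp add: sum.remove)
      show "w u x = (\<Sum>m\<in>M - {m0}. (\<lambda>x. w u m * (\<delta> m x - (c m / c m0) * \<delta> m0 x))) x"
      proof (cases "x = m0")
        case True
        have z: "(\<Sum>m\<in>M - {m0}. w u m * \<delta> m x) = 0"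
          by (rule sum.neutral) (use True in \<open>auto simp: \<delta>_def\<close>)
        have "(\<Sum>m\<in>M - {m0}. w u m * c m / c m0) = (\<Sum>m\<in>M - {m0}. c m * w u m) / c m0"
          by (simp add: sum_divide_distrib mult.commute)
        also have "\<dots> = - w u m0" using o m0 by (simp add: field_simps eq_neg_iff_add_eq_0 add.commute)
        finally show ?thesis unfolding r using True z by (simp add: \<delta>_def)
      next
        case False
        have "(\<Sum>m\<in>M - {m0}. w u m * \<delta> m x) = (\<Sum>m\<in>M - {m0}. if m = x then w u x else 0)"
          by (rule sum.cong) (auto simp: \<delta>_def)
        also have "\<dots> = (if x \<in> M - {m0} then w u x else 0)"
          using sum.delta[of "M - {m0}" x "\<lambda>_. w u x"] fM by simp
        also have "\<dots> = (if x \<in> M then w u x else 0)" using False by simp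
        finally have "(\<Sum>m\<in>M - {m0}. w u m * \<delta> m x) = (if x \<in> M then w u x else 0)" .
        moreover have d0: "\<delta> m0 x = 0" using False by (simp add: \<delta>_def)
        ultimately show ?thesis unfolding r using supp[OF u, of x] by (cases "x \<in> M") simp_all
      qed
    qed
    show "w u \<in> fv.span T"
    proof (subst eq, rule fv.span_sum)
      fix m assume "m \<in> M - {m0}"
      then have "(\<lambda>x. \<delta> m x - (c m / c m0) * \<delta> m0 x) \<in> fv.span T"
        unfolding T_def by (intro fv.span_base) blast
      then have "(\<lambda>x. w u m * (\<lambda>x. \<delta> m x - (c m / c m0) * \<delta> m0 x) x) \<in> fv.span T"
        by (rule fv.span_scale)
      then show "(\<lambda>x. w u m * (\<delta> m x - c m / c m0 * \<delta> m0 x)) \<in> fv.span T" by simp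
    qed
  qed
  have "finite T" using fM by (simp add: T_def)
  then have "card (w ` U) \<le> card T" using fv.independent_span_bound[OF _ ind spanT] by blast
  also have "\<dots> \<le> card (M - {m0})" unfolding T_def by (rule card_image_le) (use fM in simp)
  also have "\<dots> < card M" by (rule card_Diff1_less[OF fM m0(1)])
  finally have "card U < card M" using card_image[OF injw] by simp
  then show False using cardle by simp
qed

definition pure :: "nat \<Rightarrow> nat \<Rightarrow> monom" where
  "pure i d = (\<lambda>j. if j = i then d else 0)"

lemma pure_in: "i < n \<Longrightarrow> pure i d \<in> monoms n d"
  by (auto simp: monoms_def pure_def)

lemma key_identity:
  fixes c :: "monom \<Rightarrow> 'k::field" and f :: "monom \<Rightarrow> 'k"
  assumes d: "d \<ge> 1"
    and csupp: "\<And>m. c m \<noteq> 0 \<Longrightarrow> m \<in> std n G d"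
    and ann: "\<And>u. u \<in> monoms n (d-1) \<Longrightarrow> (\<Sum>j<n. c (u(j := u j + 1))) = 0"
    and f: "\<And>v. v \<notin> monoms n (d-1) \<Longrightarrow> f v = 0"
  shows "(\<Sum>m\<in>std n G d. c m * mult_ell n G (d-1) f m) = 0"
proof -
  have Sd: "Suc (d-1) = d" using d by simp
  have Sd': "Suc (d - Suc 0) = d" using d by simp
  have stdsub: "std n G d \<subseteq> monoms n d" by (auto simp: std_def)
  let ?g = "\<lambda>m j. if 0 < m j then f (m(j := m j - 1)) else 0"
  have "(\<Sum>m\<in>std n G d. c m * mult_ell n G (d-1) f m) = (\<Sum>m\<in>std n G d. c m * (\<Sum>j<n. ?g m j))"
    by (rule sum.cong) (auto simp: mult_ell_def Sd')
  also have "\<dots> = (\<Sum>m\<in>monoms n d. c m * (\<Sum>j<n. ?g m j))"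
    by (rule sum.mono_neutral_left) (use stdsub csupp in auto)
  also have "\<dots> = (\<Sum>j<n. \<Sum>m\<in>monoms n d. c m * ?g m j)"
    by (simp add: sum_distrib_left sum.swap[of _ "monoms n d"])
  also have "\<dots> = (\<Sum>j<n. \<Sum>u\<in>monoms n (d-1). c (u(j := u j + 1)) * f u)"
  proof (rule sum.cong[OF refl])
    fix j assume j: "j \<in> {..<n}"
    have b: "bij_betw (\<lambda>u. u(j := u j + 1)) (monoms n (d-1)) {m \<in> monoms n d. 0 < m j}"
      using bij_shift[of j n "d-1"] j Sd by simp
    have "(\<Sum>m\<in>monoms n d. c m * ?g m j) = (\<Sum>m\<in>{m \<in> monoms n d. 0 < m j}. c m * f (m(j := m j - 1)))"
      by (rule sum.mono_neutral_cong_right) auto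
    also have "\<dots> = (\<Sum>u\<in>monoms n (d-1). c (u(j := u j + 1)) * f u)"
      by (subst sum.reindex_bij_betw[OF b, symmetric]) simp
    finally show "(\<Sum>m\<in>monoms n d. c m * ?g m j) = (\<Sum>u\<in>monoms n (d-1). c (u(j := u j + 1)) * f u)" .
  qed
  also have "\<dots> = (\<Sum>u\<in>monoms n (d-1). \<Sum>j<n. c (u(j := u j + 1)) * f u)"
    by (rule sum.swap)
  also have "\<dots> = (\<Sum>u\<in>monoms n (d-1). f u * (\<Sum>j<n. c (u(j := u j + 1))))"
  proof (rule sum.cong[OF refl])
    fix u
    have "(\<Sum>j<n. c (u(j := u j + 1)) * f u) = (\<Sum>j<n. c (u(j := u j + 1))) * f u"
      by (rule sum_distrib_right[symmetric])
    then show "(\<Sum>j<n. c (u(j := u j + 1)) * f u) = f u * (\<Sum>j<n. c (u(j := u j + 1)))"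
      by (simp add: mult.commute[of "f u"])
  qed
  also have "\<dots> = 0"
  proof (rule sum.neutral, rule ballI)
    fix u assume "u \<in> monoms n (d-1)"
    then have "(\<Sum>j<n. c (u(j := u j + 1))) = 0" by (rule ann)
    then show "f u * (\<Sum>j<n. c (u(j := u j + 1))) = 0" by simp
  qed
  finally show ?thesis .
qed

lemma mult_ell_lin:
  fixes a :: "monom \<Rightarrow> 'k::field"
  assumes "finite U"
  shows "mult_ell n G k (\<lambda>v. if v \<in> U then a v else 0) m
     = (\<Sum>u\<in>U. a u * mult_ell n G k (\<lambda>x. if x = u then 1 else 0) m)"
proof (cases "m \<in> std n G (Suc k)")
  case True
  have "(\<Sum>u\<in>U. a u * mult_ell n G k (\<lambda>x. if x = u then 1 else 0) m)
     = (\<Sum>u\<in>U. \<Sum>j<n. a u * (if 0 < m j then (if m(j := m j - 1) = u then 1 else 0) else 0))"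
    using True by (simp add: mult_ell_def sum_distrib_left)
  also have "\<dots> = (\<Sum>j<n. \<Sum>u\<in>U. a u * (if 0 < m j then (if m(j := m j - 1) = u then 1 else 0) else 0))"
    by (rule sum.swap)
  also have "\<dots> = (\<Sum>j<n. if 0 < m j then (if m(j := m j - 1) \<in> U then a (m(j := m j - 1)) else 0) else 0)"
  proof (rule sum.cong[OF refl])
    fix j
    have h: "(\<Sum>u\<in>U. a u * (if x = u then 1 else 0)) = (if x \<in> U then a x else 0)" for x
    proof -
      have "(\<Sum>u\<in>U. a u * (if x = u then 1 else 0)) = (\<Sum>u\<in>U. if x = u then a u else 0)"
        by (rule sum.cong) auto
      then show ?thesis using assms by simp
    qed
    show "(\<Sum>u\<in>U. a u * (if 0 < m j then (if m(j := m j - 1) = u then 1 else 0) else 0))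
      = (if 0 < m j then (if m(j := m j - 1) \<in> U then a (m(j := m j - 1)) else 0) else 0)"
      using h by (cases "0 < m j") auto
  qed
  finally show ?thesis using True by (simp add: mult_ell_def)
next
  case False
  then show ?thesis by (simp add: mult_ell_def)
qed

lemma nonpure_card:
  assumes n: "n \<ge> 3" and d: "d \<ge> 2"
  shows "HF_S n (d-1) \<le> card {m \<in> monoms n d. \<forall>i<n. m \<noteq> pure i d}"
proof -
  define e :: monom where "e = (\<lambda>j. if j = 0 then d-1 else if j = 1 then 1 else 0)"
  define \<phi> where "\<phi> = (\<lambda>u. if u = pure (n-1) (d-1) then e else u(n-1 := u (n-1) + 1))"
  have en: "e \<in> monoms n d"
  proof -
    have "(\<Sum>j<n. e j) = (\<Sum>j\<in>{0,1}. e j)"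
      by (rule sum.mono_neutral_right) (use n in \<open>auto simp: e_def\<close>)
    also have "\<dots> = d" using d by (simp add: e_def)
    finally show ?thesis using n by (auto simp: monoms_def e_def)
  qed
  have epure: "\<forall>i<n. e \<noteq> pure i d"
  proof (intro allI impI notI)
    fix i assume "i < n" "e = pure i d"
    then have "e 0 = pure i d 0" "e 1 = pure i d 1" by auto
    then show False using d by (auto simp: e_def pure_def split: if_splits)
  qed
  have INJ: "inj_on \<phi> (monoms n (d-1))"
  proof (rule inj_onI)
    fix u v assume uv: "u \<in> monoms n (d-1)" "v \<in> monoms n (d-1)" "\<phi> u = \<phi> v"
    have e0: "e (n-1) = 0" using n by (simp add: e_def)
    show "u = v"
    proof (cases "u = pure (n-1) (d-1)"; cases "v = pure (n-1) (d-1)")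
      assume "u = pure (n - 1) (d - 1)" "v \<noteq> pure (n - 1) (d - 1)"
      then have "e = v(n-1 := v (n-1) + 1)" using uv by (simp add: \<phi>_def)
      then have "e (n-1) = v (n-1) + 1" by (metis fun_upd_same)
      then show ?thesis using e0 by simp
    next
      assume "u \<noteq> pure (n - 1) (d - 1)" "v = pure (n - 1) (d - 1)"
      then have "e = u(n-1 := u (n-1) + 1)" using uv by (simp add: \<phi>_def)
      then have "e (n-1) = u (n-1) + 1" by (metis fun_upd_same)
      then show ?thesis using e0 by simp
    next
      assume "u \<noteq> pure (n - 1) (d - 1)" "v \<noteq> pure (n - 1) (d - 1)"
      then have h: "u(n-1 := u (n-1) + 1) = v(n-1 := v (n-1) + 1)" using uv by (simp add: \<phi>_def)
      show ?thesis
      proof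
        fix x show "u x = v x" using fun_cong[OF h, of x] by (cases "x = n-1") auto
      qed
    qed simp
  qed
  have IMG: "\<phi> ` monoms n (d-1) \<subseteq> {m \<in> monoms n d. \<forall>i<n. m \<noteq> pure i d}"
  proof clarify
    fix u assume u: "u \<in> monoms n (d-1)"
    show "\<phi> u \<in> monoms n d \<and> (\<forall>i<n. \<phi> u \<noteq> pure i d)"
    proof (cases "u = pure (n-1) (d-1)")
      case True then show ?thesis using en epure by (simp add: \<phi>_def)
    next
      case False
      have n1: "n - 1 < n" using n by simp
      have "\<phi> u = u(n-1 := u (n-1) + 1)" using False by (simp add: \<phi>_def)
      moreover have "u(n-1 := u (n-1) + 1) \<in> monoms n (Suc (d-1))"
        using bij_betw_imp_surj_on[OF bij_shift[OF n1, of "d-1"]] u by blast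
      moreover have "\<forall>i<n. u(n-1 := u (n-1) + 1) \<noteq> pure i d"
      proof (intro allI impI notI)
        fix i assume i: "i < n" and h: "u(n-1 := u (n-1) + 1) = pure i d"
        have "i = n - 1"
        proof (rule ccontr)
          assume "i \<noteq> n-1"
          then have "(u(n-1 := u (n-1) + 1)) (n-1) = 0" using h by (simp add: pure_def)
          then show False by simp
        qed
        have "u = pure (n-1) (d-1)"
        proof
          fix x show "u x = pure (n-1) (d-1) x"
            using fun_cong[OF h, of x] \<open>i = n-1\<close> d by (cases "x = n-1") (auto simp: pure_def)
        qed
        then show False using False by simp
      qed
      ultimately show ?thesis using d by simp
    qed
  qed
  have FIN: "finite {m \<in> monoms n d. \<forall>i<n. m \<noteq> pure i d}" by simp
  show ?thesis unfolding HF_S_def by (rule card_inj_on_le[OF INJ IMG FIN])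
qed

lemma main_construct:
  fixes c :: "monom \<Rightarrow> 'k::field"
  assumes n: "n \<ge> 3" and d: "d \<ge> 2"
    and csupp: "\<And>m. c m \<noteq> 0 \<Longrightarrow> m \<in> monoms n d \<and> (\<forall>i<n. m \<noteq> pure i d)"
    and cnz: "c m0 \<noteq> 0"
    and ann: "\<And>u. u \<in> monoms n (d-1) \<Longrightarrow> (\<Sum>j<n. c (u(j := u j + 1))) = 0"
    and s1: "card {m. c m \<noteq> 0} \<le> s" and s2: "s \<le> HF_S n (d-1)"
  shows "\<exists>G. G \<subseteq> monoms n d \<and> finite G \<and> card G = HF_S n d - s \<and> minimal_gens G
                 \<and> artinian n G \<and> fails_WLP_surj TYPE('k) n G (d - 1)"
proof -
  define A where "A = {m. c m \<noteq> 0}"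
  define B where "B = {m \<in> monoms n d. \<forall>i<n. m \<noteq> pure i d}"
  have AB: "A \<subseteq> B" using csupp by (auto simp: A_def B_def)
  have fB: "finite B" by (simp add: B_def)
  have fA: "finite A" using AB fB finite_subset by blast
  have "s - card A \<le> card (B - A)"
    using nonpure_card[OF n d] s2 card_Diff_subset[OF fA AB] card_mono[OF fB AB]
    by (simp add: B_def)
  then obtain T where T: "T \<subseteq> B - A" "card T = s - card A" "finite T"
    by (rule obtain_subset_with_card_n)
  define M where "M = A \<union> T"
  have cardM: "card M = s" unfolding M_def
    using card_Un_disjoint[OF fA T(3)] T s1 by (auto simp: A_def)
  have MB: "M \<subseteq> B" using AB T by (auto simp: M_def)
  have Mmon: "M \<subseteq> monoms n d" using MB by (auto simp: B_def)
  have fM: "finite M" using MB fB finite_subset by blast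
  define G where "G = monoms n d - M"
  have Sd: "Suc (d-1) = d" using d by simp
  have Sd': "Suc (d - Suc 0) = d" using d by simp
  have std1: "std n G (d-1) = monoms n (d-1)"
  proof -
    have "\<not> in_mideal G m" if "m \<in> monoms n (d-1)" for m
    proof
      assume "in_mideal G m"
      then obtain g where "g \<in> G" "g \<le> m" by (auto simp: in_mideal_def)
      then have "d \<le> d - 1" using le_monom_deg[of g n d m "d-1"] that by (auto simp: G_def)
      then show False using d by simp
    qed
    then show ?thesis by (auto simp: std_def)
  qed
  have std1': "std n G (d - Suc 0) = monoms n (d - Suc 0)" using std1 by simp
  have std2: "std n G d = M"
  proof -
    have "in_mideal G m \<longleftrightarrow> m \<in> G" if "m \<in> monoms n d" for m
      using le_monom_eq[of _ n d m] that by (auto simp: in_mideal_def G_def)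
    then show ?thesis using Mmon by (auto simp: std_def G_def)
  qed
  have cM: "\<And>m. c m \<noteq> 0 \<Longrightarrow> m \<in> std n G d" using std2 by (auto simp: M_def A_def)
  have m0M: "m0 \<in> M" using cnz by (auto simp: M_def A_def)
  have GI: "G \<subseteq> monoms n d" by (auto simp: G_def)
  have fG: "finite G" by (simp add: G_def)
  have cardG: "card G = HF_S n d - s"
    unfolding G_def HF_S_def using card_Diff_subset[OF fM Mmon] cardM by simp
  have mg: "minimal_gens G"
    unfolding minimal_gens_def using le_monom_eq GI by blast
  have art: "artinian n G"
    unfolding artinian_def
  proof (intro allI impI exI)
    fix i assume i: "i < n"
    have "pure i d \<in> G" using pure_in[OF i] MB i by (auto simp: G_def B_def)
    then show "in_mideal G (\<lambda>j. if j = i then d else 0)"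
      by (auto simp: in_mideal_def pure_def)
  qed
  have HF1: "HF_A n G (d-1) = HF_S n (d-1)" unfolding HF_A_def HF_S_def std1 ..
  have HF2: "HF_A n G (Suc (d-1)) = s" by (simp only: HF_A_def Sd std2 cardM)
  let ?L = "mult_ell n G (d-1) :: (monom \<Rightarrow> 'k) \<Rightarrow> _"
  let ?P = "Apiece TYPE('k) n G (d-1)"
  have key: "\<And>f. (\<And>v. v \<notin> monoms n (d-1) \<Longrightarrow> f v = 0) \<Longrightarrow> (\<Sum>m\<in>M. c m * ?L f m) = 0"
    using key_identity[of d c n G] d cM ann std2 by auto
  have nsurj: "?L ` ?P \<noteq> Apiece TYPE('k) n G (Suc (d-1))"
  proof
    assume eq: "?L ` ?P = Apiece TYPE('k) n G (Suc (d-1))"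
    define \<delta> :: "monom \<Rightarrow> 'k" where "\<delta> = (\<lambda>x. if x = m0 then 1 else 0)"
    have "\<delta> \<in> Apiece TYPE('k) n G (Suc (d-1))"
      using m0M by (auto simp: Apiece_def Sd Sd' std2 \<delta>_def)
    then obtain f where f: "f \<in> ?P" "\<delta> = ?L f" using eq by blast
    have "(\<Sum>m\<in>M. c m * ?L f m) = 0"
      using f(1) by (intro key) (auto simp: Apiece_def std1 std1')
    moreover have "(\<Sum>m\<in>M. c m * ?L f m) = c m0"
    proof -
      have "(\<Sum>m\<in>M. c m * ?L f m) = (\<Sum>m\<in>M. if m = m0 then c m else 0)"
        unfolding f(2)[symmetric] by (rule sum.cong) (auto simp: \<delta>_def)
      also have "\<dots> = c m0" using fM m0M by simp
      finally show ?thesis .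
    qed
    ultimately show False using cnz by simp
  qed
  have ninj: "\<not> inj_on ?L ?P"
  proof
    assume inj: "inj_on ?L ?P"
    define w where "w = (\<lambda>u. ?L (\<lambda>x. if x = u then 1 else 0))"
    show False
    proof (rule LA[of "monoms n (d-1)" M m0 c w])
      show "finite (monoms n (d-1))" by simp
      show "finite M" by (rule fM)
      show "m0 \<in> M" by (rule m0M)
      show "c m0 \<noteq> 0" by (rule cnz)
      show "card M \<le> card (monoms n (d-1))" using cardM s2 by (simp add: HF_S_def)
      show "\<And>u m. u \<in> monoms n (d - 1) \<Longrightarrow> m \<notin> M \<Longrightarrow> w u m = 0"
        by (simp add: w_def mult_ell_def Sd Sd' std2)
      show "\<And>u. u \<in> monoms n (d - 1) \<Longrightarrow> (\<Sum>m\<in>M. c m * w u m) = 0"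
        unfolding w_def by (intro key) auto
      show "\<forall>u\<in>monoms n (d - 1). a u = 0" if h: "\<And>m. (\<Sum>u\<in>monoms n (d - 1). a u * w u m) = 0" for a
      proof -
        define f where "f = (\<lambda>v. if v \<in> monoms n (d-1) then a v else 0)"
        have "?L f = ?L 0"
        proof
          fix m
          have "?L f m = 0" unfolding f_def mult_ell_lin[OF finite_monoms] using h by (simp add: w_def)
          moreover have "?L 0 m = 0" by (simp add: mult_ell_def zero_fun_def)
          ultimately show "?L f m = ?L 0 m" by simp
        qed
        moreover have "f \<in> ?P" "0 \<in> ?P" by (auto simp: Apiece_def std1 std1' f_def)
        ultimately have "f = 0" using inj by (meson inj_onD)
        then show ?thesis by (auto simp: f_def fun_eq_iff) (metis)
      qed
    qed
  qed
  have fw: "fails_WLP_surj TYPE('k) n G (d - 1)"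
    unfolding fails_WLP_surj_def maximal_rank_def using nsurj ninj HF1 HF2 s2 by simp
  show ?thesis using GI fG cardG mg art fw by blast
qed

lemma shift_in:
  assumes "j < n" "u \<in> monoms n k" shows "u(j := u j + 1) \<in> monoms n (Suc k)"
  using bij_betw_imp_surj_on[OF bij_shift[OF assms(1), of k]] assms(2) by blast

lemma sum4_le:
  fixes m :: monom
  assumes "4 \<le> j" "j < n"
  shows "m 0 + m 1 + m 2 + m 3 + m j \<le> (\<Sum>i<n. m i)"
proof -
  have "(\<Sum>i\<in>{0,1,2,3,j}. m i) \<le> (\<Sum>i<n. m i)"
    by (rule sum_mono2) (use assms in auto)
  then show ?thesis using assms by simp
qed

lemma sum_lt4:
  fixes g :: "nat \<Rightarrow> 'a::comm_monoid_add"
  assumes "n \<ge> 4"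
  shows "(\<Sum>j<n. g j) = g 0 + g 1 + g 2 + g 3 + (\<Sum>j\<in>{4..<n}. g j)"
proof -
  have "{..<n} = {..<4} \<union> {4..<n}" using assms by auto
  then have "(\<Sum>j<n. g j) = (\<Sum>j<4. g j) + (\<Sum>j\<in>{4..<n}. g j)"
    by (metis finite_atLeastLessThan finite_lessThan ivl_disj_int_one(2) sum.union_disjoint)
  moreover have "(\<Sum>j<4. g j) = g 0 + g 1 + g 2 + g 3" by (simp add: numeral_eq_Suc add.assoc)
  ultimately show ?thesis by (simp add: add.assoc)
qed

definition c4 :: "nat \<Rightarrow> nat \<Rightarrow> monom \<Rightarrow> 'k::field" where
  "c4 n d m = (if m \<in> monoms n d \<and> m 0 + m 1 = 1 \<and> m 2 + m 3 = d - 1 then (-1) ^ (m 1 + m 3) else 0)"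

lemma c4_rest:
  assumes "m \<in> monoms n d" "m 0 + m 1 = 1" "m 2 + m 3 = d - 1" "d \<ge> 1" "4 \<le> j"
  shows "m j = 0"
proof (cases "j < n")
  case True
  then show ?thesis using sum4_le[OF assms(5) True, of m] assms by (auto simp: monoms_def)
next
  case False
  then show ?thesis using assms by (auto simp: monoms_def)
qed

lemma c4_props:
  assumes n: "n \<ge> 4" and d: "d \<ge> 2"
  shows "\<And>m. (c4 n d m :: 'k::field) \<noteq> 0 \<Longrightarrow> m \<in> monoms n d \<and> (\<forall>i<n. m \<noteq> pure i d)"
    and "(c4 n d (\<lambda>j. if j = 0 then 1 else if j = 3 then d - 1 else 0) :: 'k) \<noteq> 0"
    and "\<And>u. u \<in> monoms n (d-1) \<Longrightarrow> (\<Sum>j<n. (c4 n d (u(j := u j + 1)) :: 'k)) = 0"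
    and "card {m. (c4 n d m :: 'k) \<noteq> 0} \<le> 2 * d"
proof -
  show "m \<in> monoms n d \<and> (\<forall>i<n. m \<noteq> pure i d)" if "(c4 n d m :: 'k) \<noteq> 0" for m
  proof -
    have m: "m \<in> monoms n d" "m 0 + m 1 = 1" "m 2 + m 3 = d - 1"
      using that by (auto simp: c4_def split: if_splits)
    have "m \<noteq> pure i d" for i
    proof
      assume "m = pure i d"
      then show False using m d by (auto simp: pure_def split: if_splits)
    qed
    then show ?thesis using m by auto
  qed
  show "(c4 n d (\<lambda>j. if j = 0 then 1 else if j = 3 then d - 1 else 0) :: 'k) \<noteq> 0"
  proof -
    let ?m = "(\<lambda>j. if j = 0 then 1 else if j = 3 then d - 1 else 0) :: monom"
    have "(\<Sum>i<n. ?m i) = ?m 0 + ?m 1 + ?m 2 + ?m 3 + (\<Sum>j\<in>{4..<n}. ?m j)"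
      by (rule sum_lt4[OF n])
    also have "\<dots> = d" using d by simp
    finally have "?m \<in> monoms n d" using n by (auto simp: monoms_def)
    then show ?thesis by (simp add: c4_def)
  qed
  show "(\<Sum>j<n. (c4 n d (u(j := u j + 1)) :: 'k)) = 0" if u: "u \<in> monoms n (d-1)" for u
  proof -
    have Sd: "Suc (d-1) = d" using d by simp
    have inm: "u(j := u j + 1) \<in> monoms n d" if "j < n" for j
      using shift_in[OF that u] Sd by simp
    have rest: "(c4 n d (u(j := u j + 1)) :: 'k) = 0" if "j \<in> {4..<n}" for j
    proof (rule ccontr)
      assume "(c4 n d (u(j := u j + 1)) :: 'k) \<noteq> 0"
      then have "u(j := u j + 1) \<in> monoms n d" "(u(j := u j + 1)) 0 + (u(j := u j + 1)) 1 = 1"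
        "(u(j := u j + 1)) 2 + (u(j := u j + 1)) 3 = d - 1"
        by (auto simp: c4_def split: if_splits)
      then have "(u(j := u j + 1)) j = 0" using c4_rest[of "u(j := u j + 1)" n d j] that d by auto
      then show False by simp
    qed
    have "(\<Sum>j<n. (c4 n d (u(j := u j + 1)) :: 'k)) =
      c4 n d (u(0 := u 0 + 1)) + c4 n d (u(1 := u 1 + 1)) + c4 n d (u(2 := u 2 + 1)) + c4 n d (u(3 := u 3 + 1))"
      using sum_lt4[OF n, of "\<lambda>j. (c4 n d (u(j := u j + 1)) :: 'k)"] rest by simp
    also have "\<dots> = 0"
      using inm[of 0] inm[of 1] inm[of 2] inm[of 3] n by (auto simp: c4_def)
    finally show ?thesis .
  qed
  show "card {m. (c4 n d m :: 'k) \<noteq> 0} \<le> 2 * d"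
  proof -
    define F where "F = (\<lambda>(a::nat, k::nat). (\<lambda>j. if j = 0 then 1 - a else if j = 1 then a
        else if j = 2 then k else if j = 3 then d - 1 - k else 0) :: monom)"
    have "{m. (c4 n d m :: 'k) \<noteq> 0} \<subseteq> F ` ({0,1} \<times> {..<d})"
    proof
      fix m assume "m \<in> {m. (c4 n d m :: 'k) \<noteq> 0}"
      then have m: "m \<in> monoms n d" "m 0 + m 1 = 1" "m 2 + m 3 = d - 1"
        by (auto simp: c4_def split: if_splits)
      have "m = F (m 1, m 2)"
      proof
        fix j show "m j = F (m 1, m 2) j"
          using m c4_rest[OF m, of j] d by (auto simp: F_def)
      qed
      moreover have "(m 1, m 2) \<in> {0,1} \<times> {..<d}" using m d by auto
      ultimately show "m \<in> F ` ({0,1} \<times> {..<d})" by blast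
    qed
    then have "card {m. (c4 n d m :: 'k) \<noteq> 0} \<le> card (F ` ({0,1} \<times> {..<d}))"
      by (intro card_mono) auto
    also have "\<dots> \<le> card ({0::nat,1} \<times> {..<d})" by (rule card_image_le) auto
    also have "\<dots> = 2 * d" by (simp add: card_cartesian_product)
    finally show ?thesis .
  qed
qed

lemma sum3: "(\<Sum>j<3. g j) = g 0 + g 1 + (g (2::nat) :: 'a::comm_monoid_add)"
  by (simp add: numeral_3_eq_3 numeral_2_eq_2 add.assoc)

definition h3 :: "nat \<Rightarrow> nat \<Rightarrow> nat \<Rightarrow> int" where
  "h3 a b e = (if a = 2 then 2 * (-1) ^ e else if a = 1 then (-1) ^ e * (int e - int b)
     else if a = 0 then - ((-1) ^ e * int b * int e) else 0)"

lemma h3_ann: "h3 (Suc a) b e + h3 a (Suc b) e + h3 a b (Suc e) = 0"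
proof -
  consider "a = 0" | "a = 1" | "a = 2" | "a \<ge> 3" by linarith
  then show ?thesis
  proof cases
    case 1 then show ?thesis by (simp add: h3_def algebra_simps)
  next
    case 2 then show ?thesis by (simp add: h3_def algebra_simps)
  next
    case 3 then show ?thesis by (simp add: h3_def algebra_simps)
  next
    case 4 then show ?thesis by (simp add: h3_def)
  qed
qed

definition c3 :: "nat \<Rightarrow> monom \<Rightarrow> 'k::field" where
  "c3 d m = (if m \<in> monoms 3 d then of_int (h3 (m 0) (m 1) (m 2)) else 0)"

definition trip :: "nat \<Rightarrow> nat \<Rightarrow> nat \<Rightarrow> monom" where
  "trip a b e = (\<lambda>j. if j = 0 then a else if j = 1 then b else if j = 2 then e else 0)"

lemma monoms3: "m \<in> monoms 3 d \<longleftrightarrow> m = trip (m 0) (m 1) (m 2) \<and> m 0 + m 1 + m 2 = d"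
proof
  assume m: "m \<in> monoms 3 d"
  have "m j = trip (m 0) (m 1) (m 2) j" for j
  proof -
    consider "j = 0" | "j = 1" | "j = 2" | "j \<ge> 3" by linarith
    then show ?thesis
    proof cases
      case 4
      then have "m j = 0" using m unfolding monoms_def by blast
      then show ?thesis using 4 by (simp add: trip_def)
    qed (simp_all add: trip_def)
  qed
  moreover have "m 0 + m 1 + m 2 = d" using m unfolding monoms_def mem_Collect_eq sum3 by blast
  ultimately show "m = trip (m 0) (m 1) (m 2) \<and> m 0 + m 1 + m 2 = d" by blast
next
  assume h: "m = trip (m 0) (m 1) (m 2) \<and> m 0 + m 1 + m 2 = d"
  have "\<forall>i\<ge>3. m i = 0"
  proof (intro allI impI)
    fix i :: nat assume "3 \<le> i"
    then show "m i = 0" using fun_cong[OF h[THEN conjunct1], of i] by (simp add: trip_def)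
  qed
  moreover have "(\<Sum>i<3. m i) = d" unfolding sum3 using h by blast
  ultimately show "m \<in> monoms 3 d" unfolding monoms_def by blast
qed

lemma c3_props:
  assumes d: "d \<ge> 3"
  shows "\<And>m. (c3 d m :: 'k::field_char_0) \<noteq> 0 \<Longrightarrow> m \<in> monoms 3 d \<and> (\<forall>i<3. m \<noteq> pure i d)"
    and "(c3 d (trip 2 (d-2) 0) :: 'k) \<noteq> 0"
    and "\<And>u. u \<in> monoms 3 (d-1) \<Longrightarrow> (\<Sum>j<3. (c3 d (u(j := u j + 1)) :: 'k)) = 0"
    and "card {m. (c3 d m :: 'k) \<noteq> 0} \<le> (if odd d then 3 * (d - 1) else 3 * d - 2)"
proof -
  show "m \<in> monoms 3 d \<and> (\<forall>i<3. m \<noteq> pure i d)" if "(c3 d m :: 'k) \<noteq> 0" for m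
  proof -
    have m: "m \<in> monoms 3 d" and h: "h3 (m 0) (m 1) (m 2) \<noteq> 0"
      using that by (auto simp: c3_def split: if_splits)
    have "m \<noteq> pure i d" if i: "i < 3" for i
    proof
      assume mp: "m = pure i d"
      have "i = 0 \<or> i = 1 \<or> i = 2" using i by linarith
      then show False using h d unfolding mp by (auto simp: pure_def h3_def)
    qed
    then show ?thesis using m by blast
  qed
  show "(c3 d (trip 2 (d-2) 0) :: 'k) \<noteq> 0"
  proof -
    have "trip 2 (d-2) 0 \<in> monoms 3 d" unfolding monoms3 using d by (simp add: trip_def)
    then show ?thesis by (simp add: c3_def trip_def h3_def)
  qed
  show "(\<Sum>j<3. (c3 d (u(j := u j + 1)) :: 'k)) = 0" if u: "u \<in> monoms 3 (d-1)" for u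
  proof -
    have Sd: "Suc (d-1) = d" using d by simp
    have inm: "u(j := u j + 1) \<in> monoms 3 d" if "j < 3" for j
      using shift_in[OF that u] Sd by simp
    have "(\<Sum>j<3. (c3 d (u(j := u j + 1)) :: 'k)) =
       of_int (h3 (Suc (u 0)) (u 1) (u 2) + h3 (u 0) (Suc (u 1)) (u 2) + h3 (u 0) (u 1) (Suc (u 2)))"
      unfolding sum3 using inm[of 0] inm[of 1] inm[of 2] by (simp add: c3_def)
    also have "\<dots> = 0" by (simp only: h3_ann of_int_0)
    finally show ?thesis .
  qed
  show "card {m. (c3 d m :: 'k) \<noteq> 0} \<le> (if odd d then 3 * (d - 1) else 3 * d - 2)"
  proof -
    define S1 where "S1 = {b. b \<le> d - 1 \<and> 2 * b \<noteq> d - 1}"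
    define A2 where "A2 = (\<lambda>b. trip 2 b (d - 2 - b)) ` {..d-2}"
    define A1 where "A1 = (\<lambda>b. trip 1 b (d - 1 - b)) ` S1"
    define A0 where "A0 = (\<lambda>b. trip 0 b (d - b)) ` {1..d-1}"
    have sub: "{m. (c3 d m :: 'k) \<noteq> 0} \<subseteq> A2 \<union> A1 \<union> A0"
    proof
      fix m assume "m \<in> {m. (c3 d m :: 'k) \<noteq> 0}"
      then have m: "m \<in> monoms 3 d" and h: "h3 (m 0) (m 1) (m 2) \<noteq> 0"
        by (auto simp: c3_def split: if_splits)
      have mt: "m = trip (m 0) (m 1) (m 2)" and ms: "m 0 + m 1 + m 2 = d"
        using m unfolding monoms3 by blast+
      consider "m 0 = 2" | "m 0 = 1" | "m 0 = 0" | "m 0 \<ge> 3" by linarith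
      then show "m \<in> A2 \<union> A1 \<union> A0"
      proof cases
        case 1
        then have "m 1 \<in> {..d-2}" "m 2 = d - 2 - m 1" using ms by auto
        then have "trip (m 0) (m 1) (m 2) = trip 2 (m 1) (d - 2 - m 1)" using 1 by simp
        then have "m = trip 2 (m 1) (d - 2 - m 1)" using mt by (rule trans[rotated])
        then have "m \<in> A2" unfolding A2_def using \<open>m 1 \<in> {..d-2}\<close> by (rule image_eqI)
        then show ?thesis by blast
      next
        case 2
        then have "m 2 \<noteq> m 1" using h by (auto simp: h3_def)
        then have "m 1 \<in> S1" "m 2 = d - 1 - m 1" using ms 2 by (auto simp: S1_def)
        then have "trip (m 0) (m 1) (m 2) = trip 1 (m 1) (d - 1 - m 1)" using 2 by simp
        then have "m = trip 1 (m 1) (d - 1 - m 1)" using mt by (rule trans[rotated])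
        then have "m \<in> A1" unfolding A1_def using \<open>m 1 \<in> S1\<close> by (rule image_eqI)
        then show ?thesis by blast
      next
        case 3
        then have "m 1 \<noteq> 0" "m 2 \<noteq> 0" using h by (auto simp: h3_def)
        then have "m 1 \<in> {1..d-1}" "m 2 = d - m 1" using ms 3 by auto
        then have "trip (m 0) (m 1) (m 2) = trip 0 (m 1) (d - m 1)" using 3 by simp
        then have "m = trip 0 (m 1) (d - m 1)" using mt by (rule trans[rotated])
        then have "m \<in> A0" unfolding A0_def using \<open>m 1 \<in> {1..d-1}\<close> by (rule image_eqI)
        then show ?thesis by blast
      next
        case 4
        then show ?thesis using h by (simp add: h3_def)
      qed
    qed
    have c2: "card A2 \<le> d - 1" unfolding A2_def
      using card_image_le[of "{..d-2}" "\<lambda>b. trip 2 b (d - 2 - b)"] d by simp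
    have c0: "card A0 \<le> d - 1" unfolding A0_def
      using card_image_le[of "{1..d-1}" "\<lambda>b. trip 0 b (d - b)"] d by simp
    have fS1: "finite S1" unfolding S1_def by simp
    have c1: "card A1 \<le> card S1" unfolding A1_def by (rule card_image_le[OF fS1])
    have cS1: "card S1 \<le> (if odd d then d - 1 else d)"
    proof (cases "odd d")
      case True
      then obtain k where k: "d = 2 * k + 1" by (metis oddE)
      have "S1 = {..d-1} - {k}" unfolding S1_def using k by auto
      then have "card S1 = d - 1" using k by simp
      then show ?thesis using True by simp
    next
      case False
      have "S1 \<subseteq> {..d-1}" unfolding S1_def by auto
      then have "card S1 \<le> d" using card_mono[of "{..d-1}" S1] d by simp
      then show ?thesis using False by simp
    qed
    have fin: "finite A2" "finite A1" "finite A0"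
      unfolding A2_def A1_def A0_def using fS1 by auto
    have "card {m. (c3 d m :: 'k) \<noteq> 0} \<le> card (A2 \<union> A1 \<union> A0)"
      by (rule card_mono) (use fin sub in auto)
    also have "\<dots> \<le> card A2 + card A1 + card A0"
      using card_Un_le[of "A2 \<union> A1" A0] card_Un_le[of A2 A1] by linarith
    also have "\<dots> \<le> (if odd d then 3 * (d - 1) else 3 * d - 2)"
      using c2 c1 c0 cS1 d by (cases "odd d") auto
    finally show ?thesis .
  qed
qed

lemma monoms_mono_vars:
  assumes "n \<le> n'" shows "monoms n k \<subseteq> monoms n' k"
proof
  fix m assume m: "m \<in> monoms n k"
  have z: "\<forall>i\<ge>n. m i = 0" using m unfolding monoms_def by blast
  have "(\<Sum>i<n'. m i) = (\<Sum>i<n. m i)"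
  proof (rule sum.mono_neutral_right)
    show "\<forall>i\<in>{..<n'} - {..<n}. m i = 0" using z by auto
  qed (use assms in auto)
  then have "(\<Sum>i<n'. m i) = k" using m unfolding monoms_def by simp
  moreover have "\<forall>i\<ge>n'. m i = 0" using z assms by auto
  ultimately show "m \<in> monoms n' k" unfolding monoms_def by blast
qed

lemma HF3: "HF_S 3 k = (k + 2) * (k + 1) div 2"
proof -
  have "HF_S 3 k = (k + 2) choose k" by (simp add: HF_S_eq)
  also have "\<dots> = (k + 2) choose 2" using binomial_symmetric[of k "k+2"] by simp
  also have "\<dots> = (k + 2) * (k + 1) div 2" by (simp add: choose_two)
  finally show ?thesis .
qed

lemma HF_mono_deg:
  assumes n: "n \<ge> 3" and d: "d \<ge> 2"
  shows "HF_S n (d-1) \<le> HF_S n d"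
proof -
  have "HF_S n (d-1) \<le> card {m \<in> monoms n d. \<forall>i<n. m \<noteq> pure i d}" by (rule nonpure_card[OF n d])
  also have "\<dots> \<le> card (monoms n d)" by (rule card_mono) auto
  finally show ?thesis by (simp add: HF_S_def)
qed

definition c0 :: "nat \<Rightarrow> nat \<Rightarrow> nat" where
  "c0 n d = (if n = 3 \<and> odd d then 3 * (d - 1) else if n = 3 then 3 * d - 2 else 2 * d)"

lemma beta_eq:
  assumes "d \<ge> 2" shows "beta n d = int (HF_S n d) - int (c0 n d)"
  using assms by (auto simp: beta_def HF_S_eq c0_def of_nat_diff)

lemma exists_G:
  assumes n: "n \<ge> 3" and d: "d \<ge> 2" and ex: "\<not> (n = 3 \<and> d = 2)"
    and s1: "c0 n d \<le> s" and s2: "s \<le> HF_S n (d-1)"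
  shows "\<exists>G. G \<subseteq> monoms n d \<and> finite G \<and> card G = HF_S n d - s \<and> minimal_gens G
                 \<and> artinian n G \<and> fails_WLP_surj TYPE('k::field_char_0) n G (d - 1)"
proof (cases "n = 3")
  case True
  then have d3: "d \<ge> 3" using d ex by auto
  have P1: "\<And>m. (c3 d m :: 'k) \<noteq> 0 \<Longrightarrow> m \<in> monoms 3 d \<and> (\<forall>i<3. m \<noteq> pure i d)"
    by (rule c3_props(1)[OF d3])
  have P2: "(c3 d (trip 2 (d-2) 0) :: 'k) \<noteq> 0" by (rule c3_props(2)[OF d3])
  have P3: "\<And>u. u \<in> monoms 3 (d-1) \<Longrightarrow> (\<Sum>j<3. (c3 d (u(j := u j + 1)) :: 'k)) = 0"
    by (rule c3_props(3)[OF d3])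
  have P4: "card {m. (c3 d m :: 'k) \<noteq> 0} \<le> (if odd d then 3 * (d - 1) else 3 * d - 2)"
    by (rule c3_props(4)[OF d3])
  have cs: "card {m. (c3 d m :: 'k) \<noteq> 0} \<le> s"
    using P4 s1 True by (simp add: c0_def split: if_splits)
  have s2': "s \<le> HF_S 3 (d-1)" using s2 True by simp
  have "3 \<le> (3::nat)" by simp
  from main_construct[OF this d P1 P2 P3 cs s2'] show ?thesis using True by simp
next
  case False
  then have n4: "n \<ge> 4" using n by auto
  have P1: "\<And>m. (c4 n d m :: 'k) \<noteq> 0 \<Longrightarrow> m \<in> monoms n d \<and> (\<forall>i<n. m \<noteq> pure i d)"
    by (rule c4_props(1)[OF n4 d])
  have P2: "(c4 n d (\<lambda>j. if j = 0 then 1 else if j = 3 then d - 1 else 0) :: 'k) \<noteq> 0"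
    by (rule c4_props(2)[OF n4 d])
  have P3: "\<And>u. u \<in> monoms n (d-1) \<Longrightarrow> (\<Sum>j<n. (c4 n d (u(j := u j + 1)) :: 'k)) = 0"
    by (rule c4_props(3)[OF n4 d])
  have P4: "card {m. (c4 n d m :: 'k) \<noteq> 0} \<le> 2 * d"
    by (rule c4_props(4)[OF n4 d])
  have cs: "card {m. (c4 n d m :: 'k) \<noteq> 0} \<le> s"
    using P4 s1 False by (simp add: c0_def)
  from main_construct[OF n d P1 P2 P3 cs s2] show ?thesis .
qed

lemma c0_le_iff:
  assumes n: "n \<ge> 3" and d: "d \<ge> 2"
  shows "c0 n d \<le> HF_S n (d-1) \<longleftrightarrow> \<not> (n = 3 \<and> d = 2)"
proof (cases "n = 3")
  case True
  have h: "HF_S 3 (d-1) = (d + 1) * d div 2" using HF3[of "d-1"] d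
    by (simp add: Suc_diff_Suc numeral_2_eq_2)
  show ?thesis
  proof (cases "d = 2")
    case True
    then show ?thesis using \<open>n = 3\<close> h by (simp add: c0_def)
  next
    case False
    then have d3: "d \<ge> 3" using d by simp
    have "c0 3 d \<le> (d + 1) * d div 2"
    proof (cases "d = 3")
      case True then show ?thesis by (simp add: c0_def)
    next
      case False
      then have "4 \<le> d" using d3 by simp
      then obtain k where k: "d = 4 + k" using le_Suc_ex by blast
      have B: "2 * (10 + 3 * k) \<le> (d + 1) * d" unfolding k by (simp add: algebra_simps)
      have A: "c0 3 d \<le> 10 + 3 * k" unfolding c0_def k by simp
      have "2 * c0 3 d \<le> 2 * (10 + 3 * k)" using A by simp
      then have "2 * c0 3 d \<le> (d + 1) * d" using B by (rule order_trans)
      then show ?thesis by simp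
    qed
    then show ?thesis using \<open>n = 3\<close> h False by simp
  qed
next
  case False
  then have n4: "n \<ge> 4" using n by simp
  have "2 * d \<le> HF_S n (d-1)"
  proof (cases "d = 2")
    case True
    then show ?thesis using n4 by (simp add: HF_S_eq)
  next
    case False
    then have d3: "d \<ge> 3" using d by simp
    have "HF_S 3 (d-1) \<le> HF_S n (d-1)"
      unfolding HF_S_def using monoms_mono_vars[of 3 n "d-1"] n by (intro card_mono) auto
    moreover have "HF_S 3 (d-1) = (d + 1) * d div 2" using HF3[of "d-1"] d
      by (simp add: Suc_diff_Suc numeral_2_eq_2)
    moreover have "4 * d \<le> (d + 1) * d" using d3 by (intro mult_le_mono1) simp
    ultimately show ?thesis by linarith
  qed
  then show ?thesis using False by (simp add: c0_def)
qed

theorem corollary4p2: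
  fixes n d :: nat
  assumes "n \<ge> 3" and "d \<ge> 2"
  shows "(\<forall>\<mu>::int. int (HF_S n d) - int (HF_S n (d - 1)) \<le> \<mu> \<and> \<mu> \<le> beta n d \<longrightarrow>
            (\<exists>G. G \<subseteq> monoms n d \<and> finite G \<and> int (card G) = \<mu> \<and> minimal_gens G
                 \<and> artinian n G \<and> fails_WLP_surj TYPE('k::field_char_0) n G (d - 1)))
       \<and> ((int (HF_S n d) - int (HF_S n (d - 1)) \<le> beta n d) \<longleftrightarrow> \<not> (n = 3 \<and> d = 2))"
proof
  have be: "beta n d = int (HF_S n d) - int (c0 n d)" by (rule beta_eq[OF assms(2)])
  have mono: "HF_S n (d-1) \<le> HF_S n d" by (rule HF_mono_deg[OF assms])
  show "(int (HF_S n d) - int (HF_S n (d - 1)) \<le> beta n d) \<longleftrightarrow> \<not> (n = 3 \<and> d = 2)"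
    using c0_le_iff[OF assms] be by linarith
  show "\<forall>\<mu>::int. int (HF_S n d) - int (HF_S n (d - 1)) \<le> \<mu> \<and> \<mu> \<le> beta n d \<longrightarrow>
            (\<exists>G. G \<subseteq> monoms n d \<and> finite G \<and> int (card G) = \<mu> \<and> minimal_gens G
                 \<and> artinian n G \<and> fails_WLP_surj TYPE('k::field_char_0) n G (d - 1))"
  proof (intro allI impI)
    fix \<mu> :: int
    assume mu: "int (HF_S n d) - int (HF_S n (d - 1)) \<le> \<mu> \<and> \<mu> \<le> beta n d"
    have ex: "\<not> (n = 3 \<and> d = 2)" using c0_le_iff[OF assms] be mu by linarith
    define s where "s = nat (int (HF_S n d) - \<mu>)"
    have h1: "int (c0 n d) \<le> int (HF_S n d) - \<mu>" using mu be by linarith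
    have s1: "c0 n d \<le> s" unfolding s_def using nat_mono[OF h1] by simp
    have h2: "int (HF_S n d) - \<mu> \<le> int (HF_S n (d-1))" using mu by linarith
    have s2: "s \<le> HF_S n (d-1)" unfolding s_def using nat_mono[OF h2] by simp
    have sint: "int s = int (HF_S n d) - \<mu>" using mu be by (simp add: s_def)
    obtain G where G: "G \<subseteq> monoms n d" "finite G" "card G = HF_S n d - s" "minimal_gens G"
        "artinian n G" "fails_WLP_surj TYPE('k::field_char_0) n G (d - 1)"
      using exists_G[OF assms ex s1 s2, where 'k='k] by blast
    have "int (card G) = \<mu>" using G(3) s2 mono sint by (simp add: of_nat_diff)
    then show "\<exists>G. G \<subseteq> monoms n d \<and> finite G \<and> int (card G) = \<mu> \<and> minimal_gens G
                 \<and> artinian n G \<and> fails_WLP_surj TYPE('k::field_char_0) n G (d - 1)"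
      using G by blast
  qed
qed

end
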